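(* Let $n\ge2$ and let $c_0,c_1:S^1\to\mathbb R^n$ be smooth regular closed curves. For every $\varepsilon>0$ there is a homotopy $C\in\mathbb C$ connecting $c_0$ to $c_1$ with $$E(C)=\int_I|\partial_vC|^2\,|\partial_\theta C|\,d\theta\,dv<\varepsilon .$$
   Context: $S^1=\mathbb R/2\pi\mathbb Z$, $I=S^1\times[0,1]$. The class $\mathbb C$ consists of all $C:I\to\mathbb R^n$ continuous on $I$, locally Lipschitz on $S^1\times(0,1)$, with $C(\cdot,0)=c_0$, $C(\cdot,1)=c_1$. $E$ is the energy of the (non-geometric in homotopies) metric $\langle h,k\rangle_c=\int_{S^1}\langle h,k\rangle|\dot c|\,d\theta$. *)

theory Defs
  imports "HOL-Analysis.Analysis"
begin

text \<open>Functions on S^1 = R/2piZ are represented as 2pi-periodic functions on R.\<close>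

definition periodic2pi :: "(real \<Rightarrow> 'a) \<Rightarrow> bool" where
  "periodic2pi f \<longleftrightarrow> (\<forall>t. f (t + 2 * pi) = f t)"

definition smooth_curve :: "(real \<Rightarrow> 'a::real_normed_vector) \<Rightarrow> bool" where
  "smooth_curve c \<longleftrightarrow> (\<exists>D :: nat \<Rightarrow> real \<Rightarrow> 'a. D 0 = c \<and>
      (\<forall>k t. (D k has_vector_derivative D (Suc k) t) (at t)))"

definition smooth_regular_closed_curve :: "(real \<Rightarrow> 'a::real_normed_vector) \<Rightarrow> bool" where
  "smooth_regular_closed_curve c \<longleftrightarrow> periodic2pi c \<and> smooth_curve c \<and>
      (\<forall>t. vector_derivative c (at t) \<noteq> 0)"

definition locally_lipschitz_on :: "'a::metric_space set \<Rightarrow> ('a \<Rightarrow> 'b::metric_space) \<Rightarrow> bool" where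
  "locally_lipschitz_on S f \<longleftrightarrow>
     (\<forall>p\<in>S. \<exists>e>0. \<exists>L. L-lipschitz_on (cball p e \<inter> S) f)"

definition homotopy_class :: "(real \<Rightarrow> 'a::real_normed_vector) \<Rightarrow> (real \<Rightarrow> 'a) \<Rightarrow>
    (real \<Rightarrow> real \<Rightarrow> 'a) set" where
  "homotopy_class c0 c1 = {C.
      (\<forall>\<theta> v. v \<in> {0..1} \<longrightarrow> C (\<theta> + 2 * pi) v = C \<theta> v) \<and>
      continuous_on (UNIV \<times> {0..1}) (\<lambda>(\<theta>, v). C \<theta> v) \<and>
      locally_lipschitz_on (UNIV \<times> {0<..<1}) (\<lambda>(\<theta>, v). C \<theta> v) \<and>
      (\<forall>\<theta>. C \<theta> 0 = c0 \<theta>) \<and> (\<forall>\<theta>. C \<theta> 1 = c1 \<theta>)}"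

text \<open>Partial derivatives (taken to be 0 where they do not exist; by Rademacher
  they exist almost everywhere for locally Lipschitz C).\<close>
definition partial_theta :: "(real \<Rightarrow> real \<Rightarrow> 'a::real_normed_vector) \<Rightarrow> real \<Rightarrow> real \<Rightarrow> 'a" where
  "partial_theta C \<theta> v = (if (\<lambda>s. C s v) differentiable (at \<theta>)
       then vector_derivative (\<lambda>s. C s v) (at \<theta>) else 0)"

definition partial_v :: "(real \<Rightarrow> real \<Rightarrow> 'a::real_normed_vector) \<Rightarrow> real \<Rightarrow> real \<Rightarrow> 'a" where
  "partial_v C \<theta> v = (if (\<lambda>s. C \<theta> s) differentiable (at v)
       then vector_derivative (\<lambda>s. C \<theta> s) (at v) else 0)"

definition energy_density :: "(real \<Rightarrow> real \<Rightarrow> 'a::real_normed_vector) \<Rightarrow> real \<times> real \<Rightarrow> real" where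
  "energy_density C p =
     (norm (partial_v C (fst p) (snd p)))\<^sup>2 * norm (partial_theta C (fst p) (snd p))"

definition energy :: "(real \<Rightarrow> real \<Rightarrow> 'a::real_normed_vector) \<Rightarrow> ennreal" where
  "energy C = (\<integral>\<^sup>+ p \<in> {0..2*pi} \<times> {0..1}. ennreal (energy_density C p)
      \<partial>(lborel :: (real \<times> real) measure))"

end

theory Submission
  imports Defs
begin

lemma hvd_quot:
  fixes f :: "real \<Rightarrow> 'a::real_normed_vector"
  shows "(f has_vector_derivative L) (at x) \<longleftrightarrow> ((\<lambda>h. (f (x+h) - f x) /\<^sub>R h) \<longlongrightarrow> L) (at 0)"
proof -
  have "(f has_vector_derivative L) (at x) \<longleftrightarrow> ((\<lambda>h. norm (f (x + h) - f x - h *\<^sub>R L) / norm h) \<longlongrightarrow> 0) (at 0)"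
    unfolding has_vector_derivative_def has_derivative_at using bounded_linear_scaleR_left by auto
  also have "\<dots> \<longleftrightarrow> ((\<lambda>h. norm ((f (x+h) - f x) /\<^sub>R h - L)) \<longlongrightarrow> 0) (at 0)"
  proof (rule tendsto_cong)
    have "norm (f (x + h) - f x - h *\<^sub>R L) / norm h = norm ((f (x+h) - f x) /\<^sub>R h - L)" if "h \<noteq> 0" for h
    proof -
      have "(f (x+h) - f x) /\<^sub>R h - L = (1/h) *\<^sub>R (f (x + h) - f x - h *\<^sub>R L)"
        using that by (simp add: algebra_simps inverse_eq_divide)
      then show ?thesis by (simp add: divide_inverse_commute)
    qed
    then show "\<forall>\<^sub>F h in at 0. norm (f (x + h) - f x - h *\<^sub>R L) / norm h = norm ((f (x+h) - f x) /\<^sub>R h - L)"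
      by (simp add: eventually_at_filter)
  qed
  also have "\<dots> \<longleftrightarrow> ((\<lambda>h. (f (x+h) - f x) /\<^sub>R h) \<longlongrightarrow> L) (at 0)"
    by (simp add: tendsto_norm_zero_iff LIM_zero_iff)
  finally show ?thesis .
qed

lemma diff_cauchy:
  fixes f :: "real \<Rightarrow> 'a::banach"
  shows "f differentiable (at x) \<longleftrightarrow> (\<forall>m::nat. \<exists>n::nat. \<forall>h k. 0 < \<bar>h\<bar> \<and> \<bar>h\<bar> < inverse (real (Suc n)) \<and> 0 < \<bar>k\<bar> \<and> \<bar>k\<bar> < inverse (real (Suc n)) \<longrightarrow>
     dist ((f (x+h) - f x) /\<^sub>R h) ((f (x+k) - f x) /\<^sub>R k) \<le> inverse (real (Suc m)))"
    (is "?l \<longleftrightarrow> ?r")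
proof
  define g where "g h = (f (x+h) - f x) /\<^sub>R h" for h
  assume ?l
  then obtain L where "(f has_vector_derivative L) (at x)"
    using vector_derivative_works by blast
  then have lim: "(g \<longlongrightarrow> L) (at 0)" unfolding g_def using hvd_quot by blast
  show ?r
  proof
    fix m :: nat
    have "0 < inverse (real (Suc m)) / 2" by simp
    then have "\<forall>\<^sub>F h in at 0. dist (g h) L < inverse (real (Suc m)) / 2"
      using lim tendsto_iff by blast
    then obtain d where d: "d > 0" "\<And>h. h \<noteq> 0 \<Longrightarrow> dist h 0 < d \<Longrightarrow> dist (g h) L < inverse (real (Suc m)) / 2"
      unfolding eventually_at by blast
    obtain n where n: "inverse (real (Suc n)) < d" using reals_Archimedean d(1) by blast
    show "\<exists>n::nat. \<forall>h k. 0 < \<bar>h\<bar> \<and> \<bar>h\<bar> < inverse (real (Suc n)) \<and> 0 < \<bar>k\<bar> \<and> \<bar>k\<bar> < inverse (real (Suc n)) \<longrightarrow>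
     dist ((f (x+h) - f x) /\<^sub>R h) ((f (x+k) - f x) /\<^sub>R k) \<le> inverse (real (Suc m))"
    proof (intro exI allI impI)
      fix h k assume hk: "0 < \<bar>h\<bar> \<and> \<bar>h\<bar> < inverse (real (Suc n)) \<and> 0 < \<bar>k\<bar> \<and> \<bar>k\<bar> < inverse (real (Suc n))"
      then have "dist (g h) L < inverse (real (Suc m)) / 2" "dist (g k) L < inverse (real (Suc m)) / 2"
        using d(2)[of h] d(2)[of k] n by auto
      then have "dist (g h) (g k) < inverse (real (Suc m))"
        using dist_triangle2[of "g h" "g k" L] by linarith
      then show "dist ((f (x+h) - f x) /\<^sub>R h) ((f (x+k) - f x) /\<^sub>R k) \<le> inverse (real (Suc m))"
        unfolding g_def by simp
    qed
  qed
next
  define g where "g h = (f (x+h) - f x) /\<^sub>R h" for h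
  assume r: ?r
  define a where "a n = g (inverse (real (Suc n)))" for n
  have "Cauchy a"
  proof (rule metric_CauchyI)
    fix e :: real assume "e > 0"
    then obtain m where m: "inverse (real (Suc m)) < e" using reals_Archimedean by blast
    obtain n0 where n0: "\<forall>h k. 0 < \<bar>h\<bar> \<and> \<bar>h\<bar> < inverse (real (Suc n0)) \<and> 0 < \<bar>k\<bar> \<and> \<bar>k\<bar> < inverse (real (Suc n0)) \<longrightarrow>
     dist (g h) (g k) \<le> inverse (real (Suc m))" using r unfolding g_def by blast
    show "\<exists>M. \<forall>i\<ge>M. \<forall>j\<ge>M. dist (a i) (a j) < e"
    proof (intro exI allI impI)
      fix i j assume "Suc n0 \<le> i" "Suc n0 \<le> j"
      then have "inverse (real (Suc i)) < inverse (real (Suc n0))" "inverse (real (Suc j)) < inverse (real (Suc n0))"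
        by (simp_all add: field_simps)
      then have "dist (a i) (a j) \<le> inverse (real (Suc m))" unfolding a_def using n0 by simp
      then show "dist (a i) (a j) < e" using m by linarith
    qed
  qed
  then obtain L where aL: "a \<longlonglongrightarrow> L" using Cauchy_convergent_iff convergent_def by blast
  have "(g \<longlongrightarrow> L) (at 0)"
  proof (rule tendstoI)
    fix e :: real assume "e > 0"
    then obtain m where m: "inverse (real (Suc m)) < e" using reals_Archimedean by blast
    obtain n0 where n0: "\<forall>h k. 0 < \<bar>h\<bar> \<and> \<bar>h\<bar> < inverse (real (Suc n0)) \<and> 0 < \<bar>k\<bar> \<and> \<bar>k\<bar> < inverse (real (Suc n0)) \<longrightarrow>
     dist (g h) (g k) \<le> inverse (real (Suc m))" using r unfolding g_def by blast
    have "dist (g h) L < e" if h: "h \<noteq> 0" "dist h 0 < inverse (real (Suc n0))" for h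
    proof -
      have "\<forall>j\<ge>Suc n0. dist (g h) (a j) \<le> inverse (real (Suc m))"
      proof (intro allI impI)
        fix j assume "Suc n0 \<le> j"
        then have "inverse (real (Suc j)) < inverse (real (Suc n0))"
          by (simp_all add: field_simps)
        then show "dist (g h) (a j) \<le> inverse (real (Suc m))" unfolding a_def using n0 h by simp
      qed
      moreover have "(\<lambda>j. dist (g h) (a j)) \<longlonglongrightarrow> dist (g h) L"
        by (intro tendsto_intros aL)
      ultimately have "dist (g h) L \<le> inverse (real (Suc m))"
        using LIMSEQ_le_const2 by blast
      then show ?thesis using m by linarith
    qed
    then show "\<forall>\<^sub>F h in at 0. dist (g h) L < e"
      unfolding eventually_at by (intro exI[of _ "inverse (real (Suc n0))"]) auto
  qed
  then have "(f has_vector_derivative L) (at x)" using hvd_quot unfolding g_def by blast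
  then show ?l using differentiableI_vector by blast
qed

lemma partial_theta_measurable:
  fixes F :: "real \<Rightarrow> real \<Rightarrow> 'a::euclidean_space"
  assumes cont: "continuous_on UNIV (\<lambda>p. F (fst p) (snd p))"
  shows "(\<lambda>p. partial_theta F (fst p) (snd p)) \<in> borel_measurable borel"
proof -
  define q where "q h p = (F (fst p + h) (snd p) - F (fst p) (snd p)) /\<^sub>R h" for h p
  have qcont: "continuous_on UNIV (q h)" for h
  proof -
    have "continuous_on UNIV (\<lambda>p. F (fst ((\<lambda>p. (fst p + h, snd p)) p)) (snd ((\<lambda>p. (fst p + h, snd p)) p)))"
      by (rule continuous_on_compose2[OF cont]) (auto intro!: continuous_intros)
    then have "continuous_on UNIV (\<lambda>p. F (fst p + h) (snd p))" by simp
    then show ?thesis unfolding q_def using cont by (intro continuous_intros) auto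
  qed
  define Z where "Z m n = {p. \<forall>h k. 0 < \<bar>h\<bar> \<and> \<bar>h\<bar> < inverse (real (Suc n)) \<and> 0 < \<bar>k\<bar> \<and> \<bar>k\<bar> < inverse (real (Suc n)) \<longrightarrow>
     dist (q h p) (q k p) \<le> inverse (real (Suc m))}" for m n :: nat
  have closedZ: "closed (Z m n)" for m n
    unfolding Z_def
    by (intro closed_Collect_all closed_Collect_imp closed_Collect_le continuous_intros qcont) auto
  define D where "D = (\<Inter>m. \<Union>n. Z m n)"
  have Dmeas: "D \<in> sets borel"
    unfolding D_def using closedZ by (intro sets.countable_INT' sets.countable_UN') auto
  have Diff: "p \<in> D \<longleftrightarrow> (\<lambda>s. F s (snd p)) differentiable (at (fst p))" for p
    unfolding D_def Z_def q_def diff_cauchy by simp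
  define fn where "fn n p = (if p \<in> D then q (inverse (real (Suc n))) p else 0)" for n p
  show ?thesis
  proof (rule borel_measurable_LIMSEQ_metric[of fn])
    fix i show "fn i \<in> borel_measurable borel"
      unfolding fn_def using Dmeas qcont
      by (intro measurable_If_set borel_measurable_continuous_onI) auto
  next
    fix p :: "real \<times> real"
    show "(\<lambda>i. fn i p) \<longlonglongrightarrow> partial_theta F (fst p) (snd p)"
    proof (cases "p \<in> D")
      case False
      then show ?thesis unfolding fn_def partial_theta_def using Diff by simp
    next
      case True
      let ?f = "\<lambda>s. F s (snd p)"
      have d: "?f differentiable (at (fst p))" using True Diff by blast
      then have hv: "(?f has_vector_derivative vector_derivative ?f (at (fst p))) (at (fst p))"
        using vector_derivative_works by blast
      have lim: "((\<lambda>h. (?f (fst p + h) - ?f (fst p)) /\<^sub>R h) \<longlongrightarrow> vector_derivative ?f (at (fst p))) (at 0)"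
        using hv hvd_quot[of ?f] by simp
      have seq: "filterlim (\<lambda>n. inverse (real (Suc n))) (at 0) sequentially"
        unfolding filterlim_at using LIMSEQ_inverse_real_of_nat by auto
      have "(\<lambda>n. (?f (fst p + inverse (real (Suc n))) - ?f (fst p)) /\<^sub>R inverse (real (Suc n))) \<longlonglongrightarrow> vector_derivative ?f (at (fst p))"
        using filterlim_compose[OF lim seq] by simp
      then show ?thesis unfolding fn_def partial_theta_def q_def using True d by simp
    qed
  qed
qed

lemma energy_density_measurable:
  fixes C :: "real \<Rightarrow> real \<Rightarrow> 'a::euclidean_space"
  assumes cont: "continuous_on UNIV (\<lambda>p. C (fst p) (snd p))"
  shows "energy_density C \<in> borel_measurable lborel"
proof -
  have m1: "(\<lambda>p. partial_theta C (fst p) (snd p)) \<in> borel_measurable borel"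
    using partial_theta_measurable[OF cont] .
  have cont2: "continuous_on UNIV (\<lambda>p. (\<lambda>a b. C b a) (fst p) (snd p))"
  proof -
    have "continuous_on UNIV (\<lambda>p. C (fst (prod.swap p)) (snd (prod.swap p)))"
      by (rule continuous_on_compose2[OF cont]) (auto intro!: continuous_intros)
    then show ?thesis by simp
  qed
  have m2': "(\<lambda>p. partial_theta (\<lambda>a b. C b a) (fst p) (snd p)) \<in> borel_measurable borel"
    using partial_theta_measurable[OF cont2] .
  have eq: "partial_v C (fst p) (snd p) = partial_theta (\<lambda>a b. C b a) (fst ((\<lambda>p. (snd p, fst p)) p)) (snd ((\<lambda>p. (snd p, fst p)) p))" for p
    unfolding partial_v_def partial_theta_def by simp
  have m2: "(\<lambda>p. partial_v C (fst p) (snd p)) \<in> borel_measurable borel"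
    unfolding eq by (rule measurable_compose[OF _ m2'], rule borel_measurable_continuous_onI) (intro continuous_intros)
  show ?thesis
    unfolding energy_density_def using m1 m2 by simp
qed

lemma deriv_side_bound:
  fixes f :: "real \<Rightarrow> 'a::real_normed_vector"
  assumes d: "f differentiable (at x)" and r: "r > 0"
    and s: "s = 1 \<or> s = -1"
    and b: "\<And>h. 0 < h \<Longrightarrow> h < r \<Longrightarrow> norm (f (x + s * h) - f x) \<le> A * h"
  shows "norm (vector_derivative f (at x)) \<le> A"
proof -
  define g where "g h = (f (x+h) - f x) /\<^sub>R h" for h
  have "(f has_vector_derivative vector_derivative f (at x)) (at x)"
    using d vector_derivative_works by blast
  then have lim: "(g \<longlongrightarrow> vector_derivative f (at x)) (at 0)"
    unfolding g_def using hvd_quot[of f] by simp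
  then have limr: "(g \<longlongrightarrow> vector_derivative f (at x)) (at_right 0)"
    and liml: "(g \<longlongrightarrow> vector_derivative f (at x)) (at_left 0)"
    using filterlim_at_split by blast+
  from s show ?thesis
  proof
    assume s1: "s = 1"
    have "\<forall>\<^sub>F h in at_right 0. norm (g h) \<le> A"
      unfolding eventually_at_right_field
    proof (intro exI[of _ r] conjI allI impI)
      fix h :: real assume h: "0 < h" "h < r"
      have "norm (g h) = norm (f (x+h) - f x) / h" unfolding g_def using h by (simp add: divide_inverse_commute)
      also have "\<dots> \<le> A" using b[OF h] s1 h by (simp add: divide_le_eq)
      finally show "norm (g h) \<le> A" .
    qed (use r in auto)
    then show ?thesis using Lim_norm_ubound[OF _ limr] by simp
  next
    assume s1: "s = -1"
    have "\<forall>\<^sub>F h in at_left 0. norm (g h) \<le> A"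
      unfolding eventually_at_left_field
    proof (intro exI[of _ "-r"] conjI allI impI)
      fix h :: real assume h: "-r < h" "h < 0"
      have "norm (g h) = norm (f (x+h) - f x) / (-h)" unfolding g_def using h by (simp add: divide_inverse_commute)
      also have "\<dots> \<le> A"
      proof -
        have "norm (f (x+h) - f x) \<le> A * (-h)" using b[of "-h"] s1 h by simp
        then show ?thesis using h by (subst pos_divide_le_eq) auto
      qed
      finally show "norm (g h) \<le> A" .
    qed (use r in auto)
    then show ?thesis using Lim_norm_ubound[OF _ liml] by simp
  qed
qed

lemma side_bound:
  fixes C :: "real \<Rightarrow> real \<Rightarrow> 'a::real_normed_vector"
  assumes r: "r > 0" and A: "A \<ge> 0" and B: "B \<ge> 0"
    and th: "\<And>h. 0 < h \<Longrightarrow> h < r \<Longrightarrow> norm (C (\<theta> + h) v - C \<theta> v) \<le> A * h"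
    and vs: "s = 1 \<or> s = -1"
    and vv: "\<And>h. 0 < h \<Longrightarrow> h < r \<Longrightarrow> norm (C \<theta> (v + s * h) - C \<theta> v) \<le> B * h"
  shows "energy_density C (\<theta>, v) \<le> A * B^2"
proof -
  have pt: "norm (partial_theta C \<theta> v) \<le> A"
  proof (cases "(\<lambda>s. C s v) differentiable (at \<theta>)")
    case True
    then show ?thesis unfolding partial_theta_def
      using deriv_side_bound[of "\<lambda>s. C s v" \<theta> r 1 A] th r by simp
  qed (simp add: partial_theta_def A)
  have pv: "norm (partial_v C \<theta> v) \<le> B"
  proof (cases "(\<lambda>s. C \<theta> s) differentiable (at v)")
    case True
    then show ?thesis unfolding partial_v_def
      using deriv_side_bound[of "\<lambda>s. C \<theta> s" v r s B] vv r vs by simp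
  qed (simp add: partial_v_def B)
  have "energy_density C (\<theta>, v) = (norm (partial_v C \<theta> v))\<^sup>2 * norm (partial_theta C \<theta> v)"
    unfolding energy_density_def by simp
  also have "\<dots> \<le> B^2 * A"
    by (intro mult_mono power_mono pv pt) auto
  finally show ?thesis by (simp add: mult.commute)
qed

definition cl :: "real \<Rightarrow> real" where "cl x = max 0 (min 1 x)"
definition ww :: "real \<Rightarrow> real \<Rightarrow> real" where "ww q u = cl (4 * u - q)"
definition sig :: "real \<Rightarrow> real" where "sig u = 1 - ww 1 u + ww 3 u"
definition te :: "real \<Rightarrow> real" where "te v = cl (5 * v - 1)"
definition tt :: "real \<Rightarrow> real" where "tt v = cl (5 * v - 2)"
definition tb :: "real \<Rightarrow> real" where "tb v = cl (5 * v - 3)"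
definition lam :: "real \<Rightarrow> real" where "lam v = min (cl (5 * v)) (cl (5 - 5 * v))"
definition Fl :: "real \<Rightarrow> real \<Rightarrow> real" where "Fl u v = max (min (ww 0 u) (tt v)) (ww 2 u)"
definition Gl :: "real \<Rightarrow> real \<Rightarrow> real" where "Gl u v = lam v * (Fl u v - u)"
definition Sl :: "real \<Rightarrow> real \<Rightarrow> real" where "Sl u v = max (tb v) (min (te v) (sig u))"

lemma lip_max: "\<bar>max a b - max c d\<bar> \<le> max \<bar>a - c\<bar> \<bar>b - d\<bar>" for a b c d :: real
  by (auto simp: max_def abs_if)
lemma lip_min: "\<bar>min a b - min c d\<bar> \<le> max \<bar>a - c\<bar> \<bar>b - d\<bar>" for a b c d :: real
  by (auto simp: min_def max_def abs_if)
lemma cl_lip: "\<bar>cl a - cl b\<bar> \<le> \<bar>a - b\<bar>"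
  unfolding cl_def using lip_max[of 0 "min 1 a" 0 "min 1 b"] lip_min[of 1 a 1 b] by auto
lemma cl_range: "0 \<le> cl x" "cl x \<le> 1"
  unfolding cl_def by auto
lemma cl_mono: "a \<le> b \<Longrightarrow> cl a \<le> cl b"
  unfolding cl_def by auto
lemma cl_0: "x \<le> 0 \<Longrightarrow> cl x = 0" and cl_1: "x \<ge> 1 \<Longrightarrow> cl x = 1"
  unfolding cl_def by auto

lemma ww_lip: "\<bar>ww q u - ww q u'\<bar> \<le> 4 * \<bar>u - u'\<bar>"
  proof -
  have "\<bar>(4 * u - q) - (4 * u' - q)\<bar> = 4 * \<bar>u - u'\<bar>" by (simp add: abs_if)
  then show ?thesis unfolding ww_def using cl_lip[of "4 * u - q" "4 * u' - q"] by linarith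
qed
lemma ww_range: "0 \<le> ww q u" "ww q u \<le> 1"
  unfolding ww_def using cl_range by auto
lemma sig_lip: "\<bar>sig u - sig u'\<bar> \<le> 8 * \<bar>u - u'\<bar>"
  unfolding sig_def using ww_lip[of 1 u u'] ww_lip[of 3 u u'] by linarith
lemma sig_range: "0 \<le> sig u" "sig u \<le> 1"
proof -
  have "ww 3 u > 0 \<Longrightarrow> ww 1 u = 1"
    unfolding ww_def cl_def by auto
  then show "0 \<le> sig u" "sig u \<le> 1" unfolding sig_def using ww_range[of 1 u] ww_range[of 3 u]
    by (cases "ww 3 u > 0"; auto)+
qed
lemma t_lip: "\<bar>te v - te v'\<bar> \<le> 5 * \<bar>v - v'\<bar>" "\<bar>tt v - tt v'\<bar> \<le> 5 * \<bar>v - v'\<bar>" "\<bar>tb v - tb v'\<bar> \<le> 5 * \<bar>v - v'\<bar>"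
proof -
  have "\<bar>(5 * v - q) - (5 * v' - q)\<bar> = 5 * \<bar>v - v'\<bar>" for q :: real by (simp add: abs_if)
  then show "\<bar>te v - te v'\<bar> \<le> 5 * \<bar>v - v'\<bar>" "\<bar>tt v - tt v'\<bar> \<le> 5 * \<bar>v - v'\<bar>" "\<bar>tb v - tb v'\<bar> \<le> 5 * \<bar>v - v'\<bar>"
    unfolding te_def tt_def tb_def
    using cl_lip[of "5 * v - 1" "5 * v' - 1"] cl_lip[of "5 * v - 2" "5 * v' - 2"] cl_lip[of "5 * v - 3" "5 * v' - 3"]
    by (metis order_trans order_refl)+
qed
lemma t_range: "0 \<le> te v" "te v \<le> 1" "0 \<le> tt v" "tt v \<le> 1" "0 \<le> tb v" "tb v \<le> 1"
  unfolding te_def tt_def tb_def using cl_range by auto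
lemma lam_lip: "\<bar>lam v - lam v'\<bar> \<le> 5 * \<bar>v - v'\<bar>"
proof -
  have "\<bar>lam v - lam v'\<bar> \<le> max \<bar>cl (5 * v) - cl (5 * v')\<bar> \<bar>cl (5 - 5 * v) - cl (5 - 5 * v')\<bar>"
    unfolding lam_def by (rule lip_min)
  also have "\<dots> \<le> 5 * \<bar>v - v'\<bar>"
    proof -
    have "\<bar>(5 - 5 * v) - (5 - 5 * v')\<bar> = 5 * \<bar>v - v'\<bar>" "\<bar>5 * v - 5 * v'\<bar> = 5 * \<bar>v - v'\<bar>" by (simp_all add: abs_if)
    then show ?thesis using cl_lip[of "5 * v" "5 * v'"] cl_lip[of "5 - 5 * v" "5 - 5 * v'"] by linarith
  qed
  finally show ?thesis .
qed
lemma lam_range: "0 \<le> lam v" "lam v \<le> 1"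
  unfolding lam_def using cl_range by (auto simp: min_def)
lemma Fl_range: "0 \<le> Fl u v" "Fl u v \<le> 1"
  unfolding Fl_def using ww_range t_range by (auto simp: min_def max_def)
lemma Fl_lip_u: "\<bar>Fl u v - Fl u' v\<bar> \<le> 4 * \<bar>u - u'\<bar>"
proof -
  have "\<bar>Fl u v - Fl u' v\<bar> \<le> max \<bar>min (ww 0 u) (tt v) - min (ww 0 u') (tt v)\<bar> \<bar>ww 2 u - ww 2 u'\<bar>"
    unfolding Fl_def by (rule lip_max)
  also have "\<dots> \<le> 4 * \<bar>u - u'\<bar>"
    using lip_min[of "ww 0 u" "tt v" "ww 0 u'" "tt v"] ww_lip[of 0 u u'] ww_lip[of 2 u u'] by auto
  finally show ?thesis .
qed
lemma Fl_lip_v: "\<bar>Fl u v - Fl u v'\<bar> \<le> 5 * \<bar>v - v'\<bar>"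
proof -
  have "\<bar>Fl u v - Fl u v'\<bar> \<le> max \<bar>min (ww 0 u) (tt v) - min (ww 0 u) (tt v')\<bar> \<bar>ww 2 u - ww 2 u\<bar>"
    unfolding Fl_def by (rule lip_max)
  also have "\<dots> \<le> 5 * \<bar>v - v'\<bar>"
    using lip_min[of "ww 0 u" "tt v" "ww 0 u" "tt v'"] t_lip(2)[of v v'] by auto
  finally show ?thesis .
qed
lemma Gl_lip_u: "\<bar>Gl u v - Gl u' v\<bar> \<le> 5 * \<bar>u - u'\<bar>"
proof -
  have "Gl u v - Gl u' v = lam v * ((Fl u v - Fl u' v) - (u - u'))"
    unfolding Gl_def by (simp add: algebra_simps)
  then have "\<bar>Gl u v - Gl u' v\<bar> = lam v * \<bar>(Fl u v - Fl u' v) - (u - u')\<bar>"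
    using lam_range[of v] by (simp add: abs_mult)
  also have "\<dots> \<le> 1 * (5 * \<bar>u - u'\<bar>)"
  proof (rule mult_mono)
    show "\<bar>(Fl u v - Fl u' v) - (u - u')\<bar> \<le> 5 * \<bar>u - u'\<bar>"
      using Fl_lip_u[of u v u'] abs_triangle_ineq4[of "Fl u v - Fl u' v" "u - u'"]
      by (smt (verit))
  qed (use lam_range in auto)
  finally show ?thesis by simp
qed
lemma Gl_lip_v: assumes "0 \<le> u" "u \<le> 1" shows "\<bar>Gl u v - Gl u v'\<bar> \<le> 10 * \<bar>v - v'\<bar>"
proof -
  have "Gl u v - Gl u v' = (lam v - lam v') * (Fl u v - u) + lam v' * (Fl u v - Fl u v')"
    unfolding Gl_def by (simp add: algebra_simps)
  then have "\<bar>Gl u v - Gl u v'\<bar> \<le> \<bar>lam v - lam v'\<bar> * \<bar>Fl u v - u\<bar> + lam v' * \<bar>Fl u v - Fl u v'\<bar>"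
    using lam_range by (simp add: abs_mult) (metis abs_mult abs_of_nonneg abs_triangle_ineq)
  also have "\<dots> \<le> (5 * \<bar>v - v'\<bar>) * 1 + 1 * (5 * \<bar>v - v'\<bar>)"
    using lam_lip[of v v'] Fl_range[of u v] assms lam_range[of v'] Fl_lip_v[of u v v']
    by (intro add_mono mult_mono) auto
  finally show ?thesis by simp
qed
lemma Gl_range: assumes "0 \<le> u" "u \<le> 1" shows "\<bar>Gl u v\<bar> \<le> 1"
proof -
  have "\<bar>Gl u v\<bar> = lam v * \<bar>Fl u v - u\<bar>" unfolding Gl_def using lam_range by (simp add: abs_mult)
  also have "\<dots> \<le> 1 * 1" using lam_range[of v] Fl_range[of u v] assms by (intro mult_mono) auto
  finally show ?thesis by simp
qed
lemma Sl_lip_u: "\<bar>Sl u v - Sl u' v\<bar> \<le> 8 * \<bar>u - u'\<bar>"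
proof -
  have "\<bar>Sl u v - Sl u' v\<bar> \<le> max \<bar>tb v - tb v\<bar> \<bar>min (te v) (sig u) - min (te v) (sig u')\<bar>"
    unfolding Sl_def by (rule lip_max)
  also have "\<dots> \<le> 8 * \<bar>u - u'\<bar>"
    using lip_min[of "te v" "sig u" "te v" "sig u'"] sig_lip[of u u'] by auto
  finally show ?thesis .
qed
lemma Sl_lip_v: "\<bar>Sl u v - Sl u v'\<bar> \<le> 5 * \<bar>v - v'\<bar>"
proof -
  have "\<bar>Sl u v - Sl u v'\<bar> \<le> max \<bar>tb v - tb v'\<bar> \<bar>min (te v) (sig u) - min (te v') (sig u)\<bar>"
    unfolding Sl_def by (rule lip_max)
  also have "\<dots> \<le> 5 * \<bar>v - v'\<bar>"
    using lip_min[of "te v" "sig u" "te v'" "sig u"] t_lip[of v v'] by auto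
  finally show ?thesis .
qed
lemma Sl_range: "0 \<le> Sl u v" "Sl u v \<le> 1"
  unfolding Sl_def using t_range sig_range by (auto simp: min_def max_def)
lemma Gl_ends: "Gl 0 v = 0" "Gl 1 v = 0"
  unfolding Gl_def Fl_def ww_def cl_def using t_range by (auto simp: min_def max_def)
lemma Sl_ends: "Sl 0 v = Sl 1 v"
  unfolding Sl_def sig_def ww_def cl_def by simp
lemma at_0: "v \<le> 0 \<Longrightarrow> Gl u v = 0 \<and> Sl u v = 0"
  unfolding Gl_def Sl_def lam_def te_def tb_def cl_def using sig_range[of u] by (auto simp: min_def max_def)
lemma at_1: "v \<ge> 1 \<Longrightarrow> Gl u v = 0 \<and> Sl u v = 1"
  unfolding Gl_def Sl_def lam_def te_def tb_def cl_def using sig_range[of u] by (auto simp: min_def max_def)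

lemma SR0: "v \<le> 1/5 \<Longrightarrow> v' \<le> 1/5 \<Longrightarrow> Sl u v' = Sl u v"
  unfolding Sl_def te_def tb_def cl_def using sig_range[of u] by (auto simp: min_def max_def)
lemma SRB: "2/5 \<le> v \<Longrightarrow> v \<le> 3/5 \<Longrightarrow> 2/5 \<le> v' \<Longrightarrow> v' \<le> 3/5 \<Longrightarrow> Sl u v' = Sl u v"
  unfolding Sl_def te_def tb_def cl_def using sig_range[of u] by (auto simp: min_def max_def)
lemma SR1: "4/5 \<le> v \<Longrightarrow> 4/5 \<le> v' \<Longrightarrow> Sl u v' = Sl u v"
  unfolding Sl_def te_def tb_def cl_def using sig_range[of u] by (auto simp: min_def max_def)

lemma phA: "1/5 \<le> v \<Longrightarrow> v \<le> 2/5 \<Longrightarrow> lam v = 1 \<and> tt v = 0 \<and> tb v = 0"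
  unfolding lam_def tt_def tb_def cl_def by (auto simp: min_def max_def)
lemma phC: "3/5 \<le> v \<Longrightarrow> v \<le> 4/5 \<Longrightarrow> lam v = 1 \<and> te v = 1 \<and> tt v = 1"
  unfolding lam_def tt_def te_def cl_def by (auto simp: min_def max_def)

lemma FlA: "1/5 \<le> v \<Longrightarrow> v \<le> 2/5 \<Longrightarrow> Fl u v = ww 2 u"
  using phA[of v] ww_range[of 0 u] ww_range[of 2 u] unfolding Fl_def by (auto simp: min_def max_def)
lemma FlC: "3/5 \<le> v \<Longrightarrow> v \<le> 4/5 \<Longrightarrow> Fl u v = ww 0 u"
proof -
  have "ww 2 u \<le> ww 0 u" unfolding ww_def by (rule cl_mono) simp
  then show "3/5 \<le> v \<Longrightarrow> v \<le> 4/5 \<Longrightarrow> Fl u v = ww 0 u"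
    using phC[of v] ww_range[of 0 u] unfolding Fl_def by (auto simp: min_def max_def)
qed

lemma A1:
  assumes "1/5 \<le> v" "v \<le> v'" "v' \<le> 2/5" "sig u \<le> te v"
  shows "Sl u v' = Sl u v \<and> Gl u v' = Gl u v"
proof -
  have "te v \<le> te v'" unfolding te_def using assms by (intro cl_mono) auto
  then show ?thesis
    using assms phA[of v] phA[of v'] FlA[of v u] FlA[of v' u] unfolding Sl_def Gl_def by (auto simp: min_def max_def)
qed

lemma A2:
  assumes "1/5 < v" "v < 2/5" "te v < sig u" "0 \<le> u" "u \<le> u'"
    "u' \<le> u + min ((sig u - te v)/8) (if u < 1/2 then 1/2 - u else 1)"
  shows "Sl u' v = Sl u v \<and> Fl u' v = Fl u v"
proof -
  have te0: "te v > 0" unfolding te_def cl_def using assms by auto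
  have "sig u' \<ge> sig u - 8 * \<bar>u - u'\<bar>" using sig_lip[of u u'] by linarith
  moreover have "8 * \<bar>u - u'\<bar> \<le> sig u - te v"
  proof -
    have "u' - u \<le> (sig u - te v)/8"
      using assms(6) min.cobounded1[of "(sig u - te v)/8" "if u < 1/2 then 1/2 - u else 1"] by linarith
    moreover have e: "\<bar>u - u'\<bar> = u' - u" using assms(5) by simp
    ultimately show ?thesis by (simp add: field_simps)
  qed
  ultimately have s1: "te v \<le> sig u'" by linarith
  have "ww 2 u' = ww 2 u"
  proof (cases "u < 1/2")
    case True
    have m: "min ((sig u - te v)/8) (if u < 1/2 then 1/2 - u else 1) \<le> 1/2 - u" using True by simp
    have "u' \<le> 1/2" using assms(6) m by linarith
    then show ?thesis using True unfolding ww_def cl_def by (auto simp: min_def max_def)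
  next
    case False
    have "\<not> (u \<le> 3/4)"
    proof
      assume "u \<le> 3/4"
      then have "sig u = 0" using False unfolding sig_def ww_def cl_def by (auto simp: min_def max_def)
      then show False using assms te0 by linarith
    qed
    then show ?thesis using assms unfolding ww_def cl_def by (auto simp: min_def max_def)
  qed
  then show ?thesis
    using s1 assms phA[of v] FlA[of v u] FlA[of v u'] unfolding Sl_def by (auto simp: min_def max_def)
qed

lemma C1:
  assumes "3/5 \<le> v'" "v' \<le> v" "v \<le> 4/5" "tb v \<le> sig u"
  shows "Sl u v' = Sl u v \<and> Gl u v' = Gl u v"
proof -
  have "tb v' \<le> tb v" unfolding tb_def using assms by (intro cl_mono) auto
  then show ?thesis
    using assms phC[of v] phC[of v'] FlC[of v u] FlC[of v' u] sig_range[of u]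
    unfolding Sl_def Gl_def by (auto simp: min_def max_def)
qed

lemma C2:
  assumes "3/5 \<le> v" "v \<le> 4/5" "sig u < tb v" "0 \<le> u" "u \<le> u'"
    "u' \<le> u + (tb v - sig u)/8"
  shows "Sl u' v = Sl u v \<and> Fl u' v = Fl u v"
proof -
  have "sig u' \<le> sig u + 8 * \<bar>u - u'\<bar>" using sig_lip[of u u'] by linarith
  moreover have "8 * \<bar>u - u'\<bar> \<le> tb v - sig u"
  proof -
    have "u' - u \<le> (tb v - sig u)/8" using assms(6) by linarith
    moreover have e: "\<bar>u - u'\<bar> = u' - u" using assms(5) by simp
    ultimately show ?thesis by (simp add: field_simps)
  qed
  ultimately have s1: "sig u' \<le> tb v" by linarith
  have "\<not> (u \<le> 1/4)"
  proof
    assume "u \<le> 1/4"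
    then have "sig u = 1" unfolding sig_def ww_def cl_def by (auto simp: min_def max_def)
    then show False using assms t_range[of v] by linarith
  qed
  then have "ww 0 u' = ww 0 u" using assms unfolding ww_def cl_def by (auto simp: min_def max_def)
  then show ?thesis
    using s1 assms phC[of v] FlC[of v u] FlC[of v u'] sig_range[of u] sig_range[of u']
    unfolding Sl_def by (auto simp: min_def max_def)
qed

lemma frac_glue:
  fixes f :: "real \<Rightarrow> real"
  assumes L: "L \<ge> 0"
    and lip: "\<And>x y. 0 \<le> x \<Longrightarrow> x \<le> 1 \<Longrightarrow> 0 \<le> y \<Longrightarrow> y \<le> 1 \<Longrightarrow> \<bar>f x - f y\<bar> \<le> L * \<bar>x - y\<bar>"
    and e: "f 0 = f 1"
  shows "\<bar>f (frac x) - f (frac y)\<bar> \<le> 2 * L * \<bar>x - y\<bar>"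
proof -
  have key: "\<bar>f (frac a) - f (frac b)\<bar> \<le> 2 * L * (b - a)" if ab: "a \<le> b" for a b
  proof -
    have fa: "0 \<le> frac a" "frac a < 1" and fb: "0 \<le> frac b" "frac b < 1"
      using frac_lt_1 by auto
    show ?thesis
    proof (cases "floor a = floor b")
      case True
      then have "frac b - frac a = b - a" unfolding frac_def by simp
      then have "\<bar>f (frac a) - f (frac b)\<bar> \<le> L * (b - a)"
        using lip[of "frac a" "frac b"] fa fb ab by (simp add: abs_minus_commute)
      also have "\<dots> \<le> 2 * L * (b - a)" using L ab by (simp add: mult_right_mono)
      finally show ?thesis .
    next
      case False
      then have lt: "floor a < floor b" using floor_mono[OF ab] by linarith
      have t1: "\<bar>f (frac a) - f (frac b)\<bar> \<le> \<bar>f (frac a) - f 1\<bar> + \<bar>f 0 - f (frac b)\<bar>"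
        using e by (metis abs_triangle_ineq diff_add_cancel add_diff_eq)
      have h1: "\<bar>f (frac a) - f 1\<bar> \<le> L * (1 - frac a)"
        using lip[of "frac a" 1] fa by (simp add: abs_if)
      have h2: "\<bar>f 0 - f (frac b)\<bar> \<le> L * frac b"
        using lip[of 0 "frac b"] fb by simp
      show ?thesis
      proof (cases "b - a \<ge> 1")
        case True
        have "L * (1 - frac a) \<le> L" "L * frac b \<le> L" using L fa fb by (auto simp: mult_left_le)
        then have "\<bar>f (frac a) - f (frac b)\<bar> \<le> 2 * L" using t1 h1 h2 by linarith
        also have "\<dots> \<le> 2 * L * (b - a)" using True L by (simp add: mult_left_mono[of 1 "b-a" "2*L", simplified])
        finally show ?thesis .
      next
        case False
        have "floor b \<le> floor (a + 1)" using False by (intro floor_mono) linarith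
        then have "floor b = floor a + 1" using lt by simp
        then have "frac b - frac a = b - a - 1" unfolding frac_def by simp
        then have eq2: "1 - frac a + frac b = b - a" by linarith
        have "L * (1 - frac a) + L * frac b = L * (1 - frac a + frac b)" by (simp add: algebra_simps)
        then have "L * (1 - frac a) + L * frac b = L * (b - a)" using eq2 by simp
        then have "\<bar>f (frac a) - f (frac b)\<bar> \<le> L * (b - a)" using t1 h1 h2 by linarith
        also have "\<dots> \<le> 2 * L * (b - a)" using L ab by (simp add: mult_right_mono)
        finally show ?thesis .
      qed
    qed
  qed
  show ?thesis
  proof (cases "x \<le> y")
    case True
    then have "\<bar>x - y\<bar> = y - x" by simp
    then show ?thesis using key[of x y] True by simp
  next
    case False
    then have "\<bar>x - y\<bar> = x - y" by simp
    then show ?thesis using key[of y x] False by (simp add: abs_minus_commute)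
  qed
qed

definition Ug :: "real \<Rightarrow> real \<Rightarrow> real" where "Ug d \<theta> = frac (\<theta> / d)"
definition Xg :: "real \<Rightarrow> real \<Rightarrow> real \<Rightarrow> real" where "Xg d \<theta> v = \<theta> + d * Gl (Ug d \<theta>) v"
definition Sg :: "real \<Rightarrow> real \<Rightarrow> real \<Rightarrow> real" where "Sg d \<theta> v = Sl (Ug d \<theta>) v"
definition Hc :: "(real \<Rightarrow> 'a::real_vector) \<Rightarrow> (real \<Rightarrow> 'a) \<Rightarrow> real \<Rightarrow> real \<Rightarrow> 'a" where
  "Hc c0 c1 X S = (1 - S) *\<^sub>R c0 X + S *\<^sub>R c1 X"
definition Cm :: "(real \<Rightarrow> 'a::real_vector) \<Rightarrow> (real \<Rightarrow> 'a) \<Rightarrow> real \<Rightarrow> real \<Rightarrow> real \<Rightarrow> 'a" where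
  "Cm c0 c1 d \<theta> v = Hc c0 c1 (Xg d \<theta> v) (Sg d \<theta> v)"

lemma Ug_range: "0 \<le> Ug d \<theta>" "Ug d \<theta> < 1"
  unfolding Ug_def using frac_lt_1 by auto

lemma Gg_lip:
  assumes "d > 0"
  shows "\<bar>Gl (Ug d \<theta>) v - Gl (Ug d \<theta>') v'\<bar> \<le> (10 / d) * \<bar>\<theta> - \<theta>'\<bar> + 10 * \<bar>v - v'\<bar>"
proof -
  have "\<bar>Gl (Ug d \<theta>) v - Gl (Ug d \<theta>') v\<bar> \<le> 2 * 5 * \<bar>\<theta>/d - \<theta>'/d\<bar>"
    unfolding Ug_def by (rule frac_glue[of 5 "\<lambda>u. Gl u v"]) (auto intro: Gl_lip_u simp: Gl_ends)
  also have "\<dots> = (10 / d) * \<bar>\<theta> - \<theta>'\<bar>" using assms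
    by (simp add: diff_divide_distrib[symmetric] abs_divide)
  finally have 1: "\<bar>Gl (Ug d \<theta>) v - Gl (Ug d \<theta>') v\<bar> \<le> (10 / d) * \<bar>\<theta> - \<theta>'\<bar>" .
  have 2: "\<bar>Gl (Ug d \<theta>') v - Gl (Ug d \<theta>') v'\<bar> \<le> 10 * \<bar>v - v'\<bar>"
    using Gl_lip_v Ug_range[of d \<theta>'] by auto
  show ?thesis using 1 2 by linarith
qed

lemma Sg_lip:
  assumes "d > 0"
  shows "\<bar>Sl (Ug d \<theta>) v - Sl (Ug d \<theta>') v'\<bar> \<le> (16 / d) * \<bar>\<theta> - \<theta>'\<bar> + 5 * \<bar>v - v'\<bar>"
proof -
  have "\<bar>Sl (Ug d \<theta>) v - Sl (Ug d \<theta>') v\<bar> \<le> 2 * 8 * \<bar>\<theta>/d - \<theta>'/d\<bar>"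
    unfolding Ug_def by (rule frac_glue[of 8 "\<lambda>u. Sl u v"]) (auto intro: Sl_lip_u simp: Sl_ends)
  also have "\<dots> = (16 / d) * \<bar>\<theta> - \<theta>'\<bar>" using assms
    by (simp add: diff_divide_distrib[symmetric] abs_divide)
  finally have 1: "\<bar>Sl (Ug d \<theta>) v - Sl (Ug d \<theta>') v\<bar> \<le> (16 / d) * \<bar>\<theta> - \<theta>'\<bar>" .
  have 2: "\<bar>Sl (Ug d \<theta>') v - Sl (Ug d \<theta>') v'\<bar> \<le> 5 * \<bar>v - v'\<bar>"
    using Sl_lip_v by auto
  show ?thesis using 1 2 by linarith
qed

lemma Xg_lip:
  assumes "d > 0"
  shows "\<bar>Xg d \<theta> v - Xg d \<theta>' v'\<bar> \<le> 11 * \<bar>\<theta> - \<theta>'\<bar> + 10 * d * \<bar>v - v'\<bar>"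
proof -
  have "\<bar>Xg d \<theta> v - Xg d \<theta>' v'\<bar> \<le> \<bar>\<theta> - \<theta>'\<bar> + d * \<bar>Gl (Ug d \<theta>) v - Gl (Ug d \<theta>') v'\<bar>"
    unfolding Xg_def using assms
    by (metis (no_types, opaque_lifting) abs_mult abs_of_pos abs_triangle_ineq add_diff_add right_diff_distrib)
  also have "\<dots> \<le> \<bar>\<theta> - \<theta>'\<bar> + d * ((10 / d) * \<bar>\<theta> - \<theta>'\<bar> + 10 * \<bar>v - v'\<bar>)"
    using Gg_lip[OF assms] assms by (intro add_left_mono mult_left_mono) auto
  also have "\<dots> = 11 * \<bar>\<theta> - \<theta>'\<bar> + 10 * d * \<bar>v - v'\<bar>"
    using assms by (simp add: algebra_simps)
  finally show ?thesis .
qed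

lemma Xg_near: "0 < d \<Longrightarrow> \<bar>Xg d \<theta> v - \<theta>\<bar> \<le> d"
  unfolding Xg_def using Gl_range[of "Ug d \<theta>" v] Ug_range[of d \<theta>]
  by (simp add: abs_mult mult_left_le)

lemma Ug_shift:
  assumes "d > 0" "0 \<le> h" "h < d * (1 - Ug d \<theta>)"
  shows "Ug d (\<theta> + h) = Ug d \<theta> + h / d"
proof -
  have h1: "h / d < 1 - Ug d \<theta>" using assms by (simp add: field_simps)
  have h0: "0 \<le> h / d" using assms by simp
  have fr: "frac (h / d) = h / d" using h1 h0 Ug_range[of d \<theta>] by (simp add: frac_eq)
  have "(\<theta> + h) / d = \<theta> / d + h / d" by (simp add: add_divide_distrib)
  then show ?thesis unfolding Ug_def using fr h1 by (simp add: frac_add Ug_def)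
qed

lemma Ug_period:
  assumes "M > 0" shows "Ug (2*pi / real M) (\<theta> + 2*pi) = Ug (2*pi / real M) \<theta>"
proof -
  have "(\<theta> + 2*pi) / (2*pi / real M) = \<theta> / (2*pi / real M) + real M"
    using assms by (simp add: field_simps)
  then show ?thesis unfolding Ug_def by (simp add: frac_add_int_right)
qed

lemma Hc_diff:
  fixes c0 c1 :: "real \<Rightarrow> 'a::real_normed_vector"
  assumes L0: "norm (c0 X' - c0 X) \<le> L * \<bar>X' - X\<bar>" and L1: "norm (c1 X' - c1 X) \<le> L * \<bar>X' - X\<bar>"
    and K: "norm (c0 X - c1 X) \<le> K" and S: "0 \<le> S'" "S' \<le> 1"
  shows "norm (Hc c0 c1 X' S' - Hc c0 c1 X S) \<le> L * \<bar>X' - X\<bar> + K * \<bar>S' - S\<bar>"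
proof -
  have eq: "Hc c0 c1 X' S' - Hc c0 c1 X S = (1 - S') *\<^sub>R (c0 X' - c0 X) + S' *\<^sub>R (c1 X' - c1 X) + (S - S') *\<^sub>R (c0 X - c1 X)"
    unfolding Hc_def by (simp add: algebra_simps)
  have "norm (Hc c0 c1 X' S' - Hc c0 c1 X S) \<le> norm ((1 - S') *\<^sub>R (c0 X' - c0 X)) + norm (S' *\<^sub>R (c1 X' - c1 X)) + norm ((S - S') *\<^sub>R (c0 X - c1 X))"
    unfolding eq by (meson norm_triangle_ineq order_trans add_right_mono)
  also have "\<dots> = (1 - S') * norm (c0 X' - c0 X) + S' * norm (c1 X' - c1 X) + \<bar>S' - S\<bar> * norm (c0 X - c1 X)"
    using S by (simp add: abs_minus_commute)
  also have "\<dots> \<le> (1 - S') * (L * \<bar>X' - X\<bar>) + S' * (L * \<bar>X' - X\<bar>) + \<bar>S' - S\<bar> * K"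
    using S L0 L1 K by (intro add_mono mult_left_mono) auto
  also have "\<dots> = L * \<bar>X' - X\<bar> + K * \<bar>S' - S\<bar>" by (simp add: algebra_simps)
  finally show ?thesis .
qed

lemma density_pointwise:
  fixes c0 c1 :: "real \<Rightarrow> 'a::real_normed_vector"
  assumes d: "0 < d" "d \<le> 1" and LK: "0 \<le> L" "0 \<le> K"
    and Lc0: "\<And>x y. x \<in> {-10..10} \<Longrightarrow> y \<in> {-10..10} \<Longrightarrow> norm (c0 x - c0 y) \<le> L * \<bar>x - y\<bar>"
    and Lc1: "\<And>x y. x \<in> {-10..10} \<Longrightarrow> y \<in> {-10..10} \<Longrightarrow> norm (c1 x - c1 y) \<le> L * \<bar>x - y\<bar>"
    and Kb: "\<And>x. x \<in> {-10..10} \<Longrightarrow> norm (c0 x - c1 x) \<le> K"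
    and th: "0 \<le> \<theta>" "\<theta> \<le> 2*pi" and v: "0 < v" "v < 1" "v \<notin> {1/5, 2/5, 3/5, 4/5}"
  shows "energy_density (Cm c0 c1 d) (\<theta>, v) \<le> (6*L + 8*K/d) * (10*d*L)^2"
proof -
  define C where "C = Cm c0 c1 d"
  define u where "u = Ug d \<theta>"
  define r0 where "r0 = d * (1 - u)"
  define A0 where "A0 = 6*L + 8*K/d"
  define B0 where "B0 = 10*d*L"
  have u01: "0 \<le> u" "u < 1" unfolding u_def using Ug_range by auto
  have r0: "r0 > 0" "r0 \<le> 1" unfolding r0_def using u01 d
    by (simp, intro mult_le_one) auto
  have A0: "A0 \<ge> 0" unfolding A0_def using LK d by auto
  have B0: "B0 \<ge> 0" unfolding B0_def using LK d by auto
  have kappa: "0 \<le> A0 * B0^2" using A0 B0 by simp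
  have Xr: "Xg d t w \<in> {-10..10}" if "0 \<le> t" "t \<le> 2*pi + 1" for t w
  proof -
    have "\<bar>Xg d t w - t\<bar> \<le> d" using Xg_near[OF d(1), of t w] .
    then have "t - d \<le> Xg d t w" "Xg d t w \<le> t + d" by linarith+
    then show ?thesis using that d pi_less_4 by simp
  qed
  have Cdiff: "norm (C t' w' - C t w) \<le> L * \<bar>Xg d t' w' - Xg d t w\<bar> + K * \<bar>Sg d t' w' - Sg d t w\<bar>"
    if "0 \<le> t" "t \<le> 2*pi + 1" "0 \<le> t'" "t' \<le> 2*pi + 1" for t w t' w'
  proof -
    have x1: "Xg d t w \<in> {-10..10}" using Xr that by simp
    have x2: "Xg d t' w' \<in> {-10..10}" using Xr that by simp
    show ?thesis unfolding C_def Cm_def Sg_def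
      by (rule Hc_diff[OF Lc0[OF x2 x1] Lc1[OF x2 x1] Kb[OF x1] Sl_range])
  qed
  have ushift: "Ug d (\<theta> + h) = u + h / d" if "0 \<le> h" "h < r0" for h
    using Ug_shift[OF d(1), of h \<theta>] that unfolding r0_def u_def by auto
  have thgen: "norm (C (\<theta> + h) v - C \<theta> v) \<le> A0 * h" if h: "0 < h" "h < r0" for h
  proof -
    have Ueq: "Ug d (\<theta> + h) = u + h / d" using ushift[of h] h by simp
    have "\<bar>Gl (u + h/d) v - Gl u v\<bar> \<le> 5 * \<bar>(u + h/d) - u\<bar>" by (rule Gl_lip_u)
    also have "\<bar>(u + h/d) - u\<bar> = h / d" using h d by simp
    finally have g0: "\<bar>Gl (u + h/d) v - Gl u v\<bar> \<le> 5 * (h / d)" .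
    have "d * \<bar>Gl (u + h/d) v - Gl u v\<bar> \<le> d * (5 * (h / d))" using g0 d by (intro mult_left_mono) auto
    also have "d * (5 * (h / d)) = 5 * h" using d by simp
    finally have g: "d * \<bar>Gl (u + h/d) v - Gl u v\<bar> \<le> 5 * h" .
    have X1: "Xg d (\<theta> + h) v = \<theta> + h + d * Gl (u + h/d) v" unfolding Xg_def Ueq by simp
    have X2: "Xg d \<theta> v = \<theta> + d * Gl u v" unfolding Xg_def u_def by simp
    have "Xg d (\<theta> + h) v - Xg d \<theta> v = h + d * (Gl (u + h/d) v - Gl u v)"
      unfolding X1 X2 by (simp add: algebra_simps)
    then have "\<bar>Xg d (\<theta> + h) v - Xg d \<theta> v\<bar> \<le> \<bar>h\<bar> + \<bar>d * (Gl (u + h/d) v - Gl u v)\<bar>"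
      by (metis abs_triangle_ineq)
    also have "\<bar>d * (Gl (u + h/d) v - Gl u v)\<bar> = d * \<bar>Gl (u + h/d) v - Gl u v\<bar>"
      using d by (simp add: abs_mult)
    finally have x: "\<bar>Xg d (\<theta> + h) v - Xg d \<theta> v\<bar> \<le> 6 * h" using g h by linarith
    have "\<bar>Sl (u + h/d) v - Sl u v\<bar> \<le> 8 * \<bar>(u + h/d) - u\<bar>" by (rule Sl_lip_u)
    also have "\<bar>(u + h/d) - u\<bar> = h / d" using h d by simp
    finally have s0: "\<bar>Sl (u + h/d) v - Sl u v\<bar> \<le> 8 * (h / d)" .
    have s: "\<bar>Sg d (\<theta> + h) v - Sg d \<theta> v\<bar> \<le> 8 * (h / d)"
      unfolding Sg_def Ueq using s0 unfolding u_def by simp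
    have "norm (C (\<theta> + h) v - C \<theta> v) \<le> L * \<bar>Xg d (\<theta> + h) v - Xg d \<theta> v\<bar> + K * \<bar>Sg d (\<theta> + h) v - Sg d \<theta> v\<bar>"
      using Cdiff[where t=\<theta> and w=v and t'="\<theta> + h" and w'=v] th h r0 by auto
    also have "\<dots> \<le> L * (6 * h) + K * (8 * (h / d))"
      using x s LK by (intro add_mono mult_left_mono) auto
    also have "\<dots> = A0 * h" unfolding A0_def by (simp add: algebra_simps)
    finally show ?thesis .
  qed
  have vgen: "norm (C \<theta> w - C \<theta> v) \<le> L * (d * \<bar>Gl u w - Gl u v\<bar>) + K * \<bar>Sl u w - Sl u v\<bar>" for w
  proof -
    have "norm (C \<theta> w - C \<theta> v) \<le> L * \<bar>Xg d \<theta> w - Xg d \<theta> v\<bar> + K * \<bar>Sg d \<theta> w - Sg d \<theta> v\<bar>"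
      using Cdiff[where t=\<theta> and w=v and t'=\<theta> and w'=w] th by auto
    also have "\<bar>Xg d \<theta> w - Xg d \<theta> v\<bar> = d * \<bar>Gl u w - Gl u v\<bar>"
      unfolding Xg_def u_def using d by (simp add: right_diff_distrib[symmetric] abs_mult)
    finally show ?thesis unfolding Sg_def u_def .
  qed
  have vB: "norm (C \<theta> w - C \<theta> v) \<le> (10*d*L + 5*K) * \<bar>w - v\<bar>" for w
  proof -
    have "L * (d * \<bar>Gl u w - Gl u v\<bar>) \<le> L * (d * (10 * \<bar>w - v\<bar>))"
      using Gl_lip_v[of u w v] u01 LK d by (intro mult_left_mono) auto
    moreover have "K * \<bar>Sl u w - Sl u v\<bar> \<le> K * (5 * \<bar>w - v\<bar>)"
      using Sl_lip_v[of u w v] LK by (intro mult_left_mono) auto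
    ultimately show ?thesis using vgen[of w] by (simp add: algebra_simps)
  qed
  have vS: "norm (C \<theta> w - C \<theta> v) \<le> B0 * \<bar>w - v\<bar>" if "Sl u w = Sl u v" for w
  proof -
    have "L * (d * \<bar>Gl u w - Gl u v\<bar>) \<le> L * (d * (10 * \<bar>w - v\<bar>))"
      using Gl_lip_v[of u w v] u01 LK d by (intro mult_left_mono) auto
    then show ?thesis using vgen[of w] that unfolding B0_def by (simp add: algebra_simps)
  qed
  have vsame: "C \<theta> w = C \<theta> v" if "Sl u w = Sl u v" "Gl u w = Gl u v" for w
    unfolding C_def Cm_def Xg_def Sg_def using that unfolding u_def by simp
  have goal: "energy_density C (\<theta>, v) \<le> A0 * B0^2"
  proof -
    consider "v < 1/5 \<or> (2/5 < v \<and> v < 3/5) \<or> 4/5 < v" | "1/5 < v \<and> v < 2/5" | "3/5 < v \<and> v < 4/5"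
      using v by force
    then show ?thesis
    proof cases
      case 1
      define e where "e = (if v < 1/5 then 1/5 - v else if v < 3/5 then 3/5 - v else 1)"
      have e: "e > 0" unfolding e_def using 1 by auto
      show ?thesis
      proof (rule side_bound[of "min r0 e" A0 B0 C \<theta> v 1])
        fix h :: real assume h: "0 < h" "h < min r0 e"
        then show "norm (C (\<theta> + h) v - C \<theta> v) \<le> A0 * h" using thgen by auto
        have "Sl u (v + 1 * h) = Sl u v"
          using 1 h v SR0[where v=v and v'="v+h" and u=u] SRB[where v=v and v'="v+h" and u=u] SR1[where v=v and v'="v+h" and u=u] unfolding e_def
          by (auto split: if_splits)
        then show "norm (C \<theta> (v + 1 * h) - C \<theta> v) \<le> B0 * h" using vS[of "v + 1*h"] h by simp
      qed (use r0 e A0 B0 in auto)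
    next
      case 2
      show ?thesis
      proof (cases "sig u \<le> te v")
        case True
        show ?thesis
        proof -
          have "energy_density C (\<theta>, v) \<le> A0 * 0^2"
          proof (rule side_bound[of "min r0 (2/5 - v)" A0 0 C \<theta> v 1])
            fix h :: real assume h: "0 < h" "h < min r0 (2/5 - v)"
            then show "norm (C (\<theta> + h) v - C \<theta> v) \<le> A0 * h" using thgen by auto
            have "C \<theta> (v + 1*h) = C \<theta> v"
              using A1[of v "v + h" u] True 2 h by (intro vsame) auto
            then show "norm (C \<theta> (v + 1 * h) - C \<theta> v) \<le> 0 * h" by simp
          qed (use r0 2 A0 in auto)
          then show ?thesis using kappa by simp
        qed
      next
        case False
        define \<rho> where "\<rho> = min (1 - u) (min ((sig u - te v)/8) (if u < 1/2 then 1/2 - u else 1))"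
        have rho: "\<rho> > 0" unfolding \<rho>_def using False u01 by auto
        have "energy_density C (\<theta>, v) \<le> 0 * (10*d*L + 5*K)^2"
        proof (rule side_bound[of "d * \<rho>" 0 "10*d*L + 5*K" C \<theta> v 1])
          fix h :: real assume h: "0 < h" "h < d * \<rho>"
          have hr0: "h < r0" using h d unfolding r0_def \<rho>_def
            by (smt (verit, best) min.cobounded1 mult_left_mono)
          have hd: "h / d < \<rho>" using h d by (simp add: field_simps)
          have A2': "Sl (u + h/d) v = Sl u v \<and> Fl (u + h/d) v = Fl u v"
            using A2[of v u "u + h/d"] 2 False u01 h d hd unfolding \<rho>_def by auto
          have lam1: "lam v = 1" using phA[of v] 2 by auto
          have "Xg d (\<theta> + h) v = Xg d \<theta> v"
            unfolding Xg_def using ushift[of h] h hr0 A2' lam1 d unfolding Gl_def u_def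
            by (simp add: algebra_simps)
          moreover have "Sg d (\<theta> + h) v = Sg d \<theta> v"
            unfolding Sg_def using ushift[of h] h hr0 A2' unfolding u_def by simp
          ultimately have "C (\<theta> + h) v = C \<theta> v" unfolding C_def Cm_def by simp
          then show "norm (C (\<theta> + h) v - C \<theta> v) \<le> 0 * h" by simp
          show "norm (C \<theta> (v + 1 * h) - C \<theta> v) \<le> (10*d*L + 5*K) * h"
            using vB[of "v + 1*h"] h by simp
        qed (use rho d LK in auto)
        then show ?thesis using kappa by simp
      qed
    next
      case 3
      show ?thesis
      proof (cases "tb v \<le> sig u")
        case True
        show ?thesis
        proof -
          have "energy_density C (\<theta>, v) \<le> A0 * 0^2"
          proof (rule side_bound[of "min r0 (v - 3/5)" A0 0 C \<theta> v "-1"])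
            fix h :: real assume h: "0 < h" "h < min r0 (v - 3/5)"
            then show "norm (C (\<theta> + h) v - C \<theta> v) \<le> A0 * h" using thgen by auto
            have "C \<theta> (v + -1*h) = C \<theta> v"
              using C1[of "v - h" v u] True 3 h by (intro vsame) auto
            then show "norm (C \<theta> (v + -1 * h) - C \<theta> v) \<le> 0 * h" by simp
          qed (use r0 3 A0 in auto)
          then show ?thesis using kappa by simp
        qed
      next
        case False
        define \<rho> where "\<rho> = min (1 - u) ((tb v - sig u)/8)"
        have rho: "\<rho> > 0" unfolding \<rho>_def using False u01 by auto
        have "energy_density C (\<theta>, v) \<le> 0 * (10*d*L + 5*K)^2"
        proof (rule side_bound[of "d * \<rho>" 0 "10*d*L + 5*K" C \<theta> v 1])
          fix h :: real assume h: "0 < h" "h < d * \<rho>"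
          have hr0: "h < r0" using h d unfolding r0_def \<rho>_def
            by (smt (verit, best) min.cobounded1 mult_left_mono)
          have hd: "h / d < \<rho>" using h d by (simp add: field_simps)
          have C2': "Sl (u + h/d) v = Sl u v \<and> Fl (u + h/d) v = Fl u v"
            using C2[of v u "u + h/d"] 3 False u01 h d hd unfolding \<rho>_def by auto
          have lam1: "lam v = 1" using phC[of v] 3 by auto
          have "Xg d (\<theta> + h) v = Xg d \<theta> v"
            unfolding Xg_def using ushift[of h] h hr0 C2' lam1 d unfolding Gl_def u_def
            by (simp add: algebra_simps)
          moreover have "Sg d (\<theta> + h) v = Sg d \<theta> v"
            unfolding Sg_def using ushift[of h] h hr0 C2' unfolding u_def by simp
          ultimately have "C (\<theta> + h) v = C \<theta> v" unfolding C_def Cm_def by simp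
          then show "norm (C (\<theta> + h) v - C \<theta> v) \<le> 0 * h" by simp
          show "norm (C \<theta> (v + 1 * h) - C \<theta> v) \<le> (10*d*L + 5*K) * h"
            using vB[of "v + 1*h"] h by simp
        qed (use rho d LK in auto)
        then show ?thesis using kappa by simp
      qed
    qed
  qed
  then show ?thesis unfolding C_def A0_def B0_def .
qed

lemma smooth_props:
  fixes c :: "real \<Rightarrow> 'a::real_normed_vector"
  assumes "smooth_curve c"
  shows "continuous_on UNIV c"
    and "\<exists>L\<ge>0. \<forall>x\<in>{-R..R}. \<forall>y\<in>{-R..R}. norm (c x - c y) \<le> L * \<bar>x - y\<bar>"
    and "\<exists>B\<ge>0. \<forall>x\<in>{-R..R}. norm (c x) \<le> B"
proof -
  obtain D :: "nat \<Rightarrow> real \<Rightarrow> 'a" where D0: "D 0 = c" and Dd: "\<And>k t. (D k has_vector_derivative D (Suc k) t) (at t)"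
    using assms unfolding smooth_curve_def by blast
  have cd: "(c has_vector_derivative D 1 t) (at t)" for t using Dd[of 0 t] D0 by simp
  have contD: "continuous_on UNIV (D k)" for k
    using Dd by (auto simp: continuous_on_eq_continuous_at intro: has_vector_derivative_continuous)
  show cc: "continuous_on UNIV c" using contD[of 0] D0 by simp
  have "compact (D 1 ` {-R..R})"
    by (rule compact_continuous_image) (meson contD continuous_on_subset subset_UNIV, simp)
  then obtain B where B: "B > 0" "\<And>x. x \<in> {-R..R} \<Longrightarrow> norm (D 1 x) \<le> B"
    using compact_imp_bounded bounded_pos by (metis image_eqI)
  show "\<exists>L\<ge>0. \<forall>x\<in>{-R..R}. \<forall>y\<in>{-R..R}. norm (c x - c y) \<le> L * \<bar>x - y\<bar>"
  proof (intro exI[of _ B] conjI ballI)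
    show "0 \<le> B" using B by simp
    fix x y assume x: "x \<in> {-R..R}" and y: "y \<in> {-R..R}"
    have key: "norm (c b - c a) \<le> B * b - B * a" if ab: "a < b" "a \<in> {-R..R}" "b \<in> {-R..R}" for a b
    proof (rule differentiable_bound_general[OF ab(1)])
      show "continuous_on {a..b} c" using cc continuous_on_subset by blast
      show "continuous_on {a..b} (\<lambda>t. B * t)" by (intro continuous_intros)
      fix t assume t: "a < t" "t < b"
      show "(c has_vector_derivative D 1 t) (at t)" by (rule cd)
      have "((\<lambda>t. B * t) has_real_derivative B) (at t)" by (auto intro!: derivative_eq_intros)
      then show "((\<lambda>t. B * t) has_vector_derivative B) (at t)"
        using has_real_derivative_iff_has_vector_derivative by blast
      show "norm (D 1 t) \<le> B" using B(2)[of t] t ab by auto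
    qed
    show "norm (c x - c y) \<le> B * \<bar>x - y\<bar>"
    proof (cases x y rule: linorder_cases)
      case less then show ?thesis using key[of x y] x y by (simp add: norm_minus_commute algebra_simps)
    next
      case equal then show ?thesis by simp
    next
      case greater then show ?thesis using key[of y x] x y by (simp add: algebra_simps)
    qed
  qed
  have "compact (c ` {-R..R})"
    by (rule compact_continuous_image) (meson cc continuous_on_subset subset_UNIV, simp)
  then obtain B' where "B' > 0" "\<And>x. x \<in> {-R..R} \<Longrightarrow> norm (c x) \<le> B'"
    using compact_imp_bounded bounded_pos by (metis image_eqI)
  then show "\<exists>B\<ge>0. \<forall>x\<in>{-R..R}. norm (c x) \<le> B" by (intro exI[of _ B']) auto
qed

lemma Xg_cont:
  assumes "d > 0"
  shows "continuous_on UNIV (\<lambda>p. Xg d (fst p) (snd p))"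
proof (rule lipschitz_on_continuous_on)
  show "(11 + 10 * d)-lipschitz_on UNIV (\<lambda>p. Xg d (fst p) (snd p))"
  proof (rule lipschitz_onI)
    fix p q :: "real \<times> real"
    have "\<bar>Xg d (fst p) (snd p) - Xg d (fst q) (snd q)\<bar> \<le> 11 * \<bar>fst p - fst q\<bar> + 10 * d * \<bar>snd p - snd q\<bar>"
      by (rule Xg_lip[OF assms])
    also have "\<dots> \<le> 11 * dist p q + 10 * d * dist p q"
      using dist_fst_le[of p q] dist_snd_le[of p q] assms
      by (intro add_mono mult_left_mono) (auto simp: dist_real_def)
    finally show "dist (Xg d (fst p) (snd p)) (Xg d (fst q) (snd q)) \<le> (11 + 10 * d) * dist p q"
      by (simp add: dist_real_def algebra_simps)
  qed (use assms in auto)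
qed

lemma Sg_cont:
  assumes "d > 0"
  shows "continuous_on UNIV (\<lambda>p. Sg d (fst p) (snd p))"
proof (rule lipschitz_on_continuous_on)
  show "(16 / d + 5)-lipschitz_on UNIV (\<lambda>p. Sg d (fst p) (snd p))"
  proof (rule lipschitz_onI)
    fix p q :: "real \<times> real"
    have "\<bar>Sg d (fst p) (snd p) - Sg d (fst q) (snd q)\<bar> \<le> (16 / d) * \<bar>fst p - fst q\<bar> + 5 * \<bar>snd p - snd q\<bar>"
      unfolding Sg_def by (rule Sg_lip[OF assms])
    also have "\<dots> \<le> (16 / d) * dist p q + 5 * dist p q"
      using dist_fst_le[of p q] dist_snd_le[of p q] assms
      by (intro add_mono mult_left_mono) (auto simp: dist_real_def)
    finally show "dist (Sg d (fst p) (snd p)) (Sg d (fst q) (snd q)) \<le> (16 / d + 5) * dist p q"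
      by (simp add: dist_real_def algebra_simps)
  qed (use assms in auto)
qed

lemma Cm_cont:
  fixes c0 c1 :: "real \<Rightarrow> 'a::real_normed_vector"
  assumes "d > 0" "continuous_on UNIV c0" "continuous_on UNIV c1"
  shows "continuous_on UNIV (\<lambda>p. Cm c0 c1 d (fst p) (snd p))"
proof -
  have X: "continuous_on UNIV (\<lambda>p. Xg d (fst p) (snd p))" and S: "continuous_on UNIV (\<lambda>p. Sg d (fst p) (snd p))"
    using Xg_cont Sg_cont assms by auto
  have c0X: "continuous_on UNIV (\<lambda>p. c0 (Xg d (fst p) (snd p)))"
    by (rule continuous_on_compose2[OF assms(2) X]) auto
  have c1X: "continuous_on UNIV (\<lambda>p. c1 (Xg d (fst p) (snd p)))"
    by (rule continuous_on_compose2[OF assms(3) X]) auto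
  show ?thesis unfolding Cm_def Hc_def
    by (intro continuous_intros S c0X c1X)
qed

lemma energy_bound:
  fixes c0 c1 :: "real \<Rightarrow> 'a::euclidean_space"
  assumes d: "0 < d" "d \<le> 1" and LK: "0 \<le> L" "0 \<le> K"
    and Lc0: "\<And>x y. x \<in> {-10..10} \<Longrightarrow> y \<in> {-10..10} \<Longrightarrow> norm (c0 x - c0 y) \<le> L * \<bar>x - y\<bar>"
    and Lc1: "\<And>x y. x \<in> {-10..10} \<Longrightarrow> y \<in> {-10..10} \<Longrightarrow> norm (c1 x - c1 y) \<le> L * \<bar>x - y\<bar>"
    and Kb: "\<And>x. x \<in> {-10..10} \<Longrightarrow> norm (c0 x - c1 x) \<le> K"
  shows "energy (Cm c0 c1 d) \<le> ennreal ((6*L + 8*K/d) * (10*d*L)^2 * (2*pi))"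
proof -
  define \<kappa> where "\<kappa> = (6*L + 8*K/d) * (10*d*L)^2"
  have k0: "\<kappa> \<ge> 0" unfolding \<kappa>_def using d LK by auto
  define I where "I = {0..2*pi} \<times> {0..(1::real)}"
  define N where "N = {0, 1/5, 2/5, 3/5, 4/5, 1::real}"
  have null: "(UNIV \<times> N) \<in> null_sets (lborel :: (real \<times> real) measure)"
  proof -
    have "N \<in> null_sets lborel" unfolding N_def by (intro finite_imp_null_set_lborel) auto
    then have "(UNIV \<times> N) \<in> null_sets (lborel \<Otimes>\<^sub>M lborel)"
      by (intro lborel.times_in_null_sets2) auto
    then show ?thesis by (simp add: lborel_prod)
  qed
  have AE: "AE p in lborel. ennreal (energy_density (Cm c0 c1 d) p) * indicator I p \<le> ennreal \<kappa> * indicator I p"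
  proof (rule AE_I'[OF null], safe)
    fix a b :: real
    assume nb: "\<not> ennreal (energy_density (Cm c0 c1 d) (a, b)) * indicator I (a, b) \<le> ennreal \<kappa> * indicator I (a, b)"
    show "b \<in> N"
    proof (rule ccontr)
      assume bN: "b \<notin> N"
      show False
      proof (cases "(a, b) \<in> I")
        case True
        then have "0 \<le> a" "a \<le> 2*pi" "0 < b" "b < 1" "b \<notin> {1/5, 2/5, 3/5, 4/5}"
          using bN unfolding I_def N_def by auto
        then have "energy_density (Cm c0 c1 d) (a, b) \<le> \<kappa>"
          unfolding \<kappa>_def by (intro density_pointwise[OF d LK Lc0 Lc1 Kb]) auto
        then have "ennreal (energy_density (Cm c0 c1 d) (a, b)) \<le> ennreal \<kappa>" by (rule ennreal_leI)
        then show False using nb True by (simp add: indicator_def)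
      next
        case False
        then show False using nb by simp
      qed
    qed
  qed simp
  have "energy (Cm c0 c1 d) = (\<integral>\<^sup>+ p. ennreal (energy_density (Cm c0 c1 d) p) * indicator I p \<partial>lborel)"
    unfolding energy_def I_def by simp
  also have "\<dots> \<le> (\<integral>\<^sup>+ p. ennreal \<kappa> * indicator I p \<partial>lborel)"
    by (rule nn_integral_mono_AE[OF AE])
  also have "\<dots> = ennreal \<kappa> * emeasure lborel I"
    by (rule nn_integral_cmult_indicator) (simp add: I_def borel_closed closed_Times)
  also have "emeasure (lborel :: (real \<times> real) measure) I = emeasure (lborel \<Otimes>\<^sub>M lborel) I"
    by (simp add: lborel_prod)
  also have "\<dots> = emeasure lborel {0..2*pi} * emeasure lborel {0..(1::real)}"
    unfolding I_def by (rule lborel.emeasure_pair_measure_Times) auto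
  also have "\<dots> = ennreal (2*pi)" by simp
  also have "ennreal \<kappa> * ennreal (2*pi) = ennreal (\<kappa> * (2*pi))"
    using k0 by (simp add: ennreal_mult)
  finally show ?thesis unfolding \<kappa>_def .
qed

lemma Cm_in_class:
  fixes c0 c1 :: "real \<Rightarrow> 'a::real_normed_vector"
  assumes sm0: "smooth_regular_closed_curve c0" and sm1: "smooth_regular_closed_curve c1"
    and M: "M > 0" and d: "d = 2*pi / real M" "d \<le> 1"
  shows "Cm c0 c1 d \<in> homotopy_class c0 c1"
proof -
  have p0: "periodic2pi c0" and s0: "smooth_curve c0" and p1: "periodic2pi c1" and s1: "smooth_curve c1"
    using sm0 sm1 unfolding smooth_regular_closed_curve_def by auto
  have d0: "d > 0" using d M by simp
  have cc0: "continuous_on UNIV c0" and cc1: "continuous_on UNIV c1"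
    using smooth_props(1) s0 s1 by auto
  have per: "Cm c0 c1 d (\<theta> + 2*pi) v = Cm c0 c1 d \<theta> v" for \<theta> v
  proof -
    have U: "Ug d (\<theta> + 2*pi) = Ug d \<theta>" using Ug_period[OF M] d by simp
    have X: "Xg d (\<theta> + 2*pi) v = Xg d \<theta> v + 2*pi" unfolding Xg_def U by simp
    have S: "Sg d (\<theta> + 2*pi) v = Sg d \<theta> v" unfolding Sg_def U by simp
    show ?thesis unfolding Cm_def Hc_def X S
      using p0 p1 unfolding periodic2pi_def by simp
  qed
  have cont: "continuous_on (UNIV \<times> {0..1}) (\<lambda>(\<theta>, v). Cm c0 c1 d \<theta> v)"
    using Cm_cont[OF d0 cc0 cc1] continuous_on_subset by (fastforce simp: case_prod_beta)
  have loc: "locally_lipschitz_on (UNIV \<times> {0<..<1}) (\<lambda>(\<theta>, v). Cm c0 c1 d \<theta> v)"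
    unfolding locally_lipschitz_on_def
  proof
    fix p :: "real \<times> real" assume "p \<in> UNIV \<times> {0<..<1}"
    define R where "R = \<bar>fst p\<bar> + 2"
    obtain L0 where L0: "L0 \<ge> 0" "\<forall>x\<in>{-R..R}. \<forall>y\<in>{-R..R}. norm (c0 x - c0 y) \<le> L0 * \<bar>x - y\<bar>"
      using smooth_props(2)[OF s0] by blast
    obtain L1 where L1: "L1 \<ge> 0" "\<forall>x\<in>{-R..R}. \<forall>y\<in>{-R..R}. norm (c1 x - c1 y) \<le> L1 * \<bar>x - y\<bar>"
      using smooth_props(2)[OF s1] by blast
    obtain B0 where B0: "B0 \<ge> 0" "\<forall>x\<in>{-R..R}. norm (c0 x) \<le> B0"
      using smooth_props(3)[OF s0] by blast
    obtain B1 where B1: "B1 \<ge> 0" "\<forall>x\<in>{-R..R}. norm (c1 x) \<le> B1"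
      using smooth_props(3)[OF s1] by blast
    define Lc where "Lc = max L0 L1"
    define K where "K = B0 + B1"
    define LL where "LL = Lc * (11 + 10 * d) + K * (16 / d + 5)"
    have Lc: "Lc \<ge> 0" "K \<ge> 0" using L0 B0 B1 unfolding Lc_def K_def by auto
    have Xin: "Xg d (fst q) (snd q) \<in> {-R..R}" if "q \<in> cball p 1" for q
    proof -
      have "\<bar>fst q - fst p\<bar> \<le> 1" using that dist_fst_le[of q p] by (auto simp: dist_real_def dist_commute)
      moreover have "\<bar>Xg d (fst q) (snd q) - fst q\<bar> \<le> d" by (rule Xg_near[OF d0])
      ultimately show ?thesis unfolding R_def using d by (auto simp: abs_le_iff)
    qed
    have "LL-lipschitz_on (cball p 1 \<inter> UNIV \<times> {0<..<1}) (\<lambda>(\<theta>, v). Cm c0 c1 d \<theta> v)"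
    proof (rule lipschitz_onI)
      show "0 \<le> LL" unfolding LL_def using Lc d0 by auto
      fix q q' assume q: "q \<in> cball p 1 \<inter> UNIV \<times> {0<..<1}" and q': "q' \<in> cball p 1 \<inter> UNIV \<times> {0<..<1}"
      let ?X = "Xg d (fst q) (snd q)" and ?X' = "Xg d (fst q') (snd q')"
      have xq: "?X \<in> {-R..R}" "?X' \<in> {-R..R}" using Xin q q' by auto
      have "norm (Hc c0 c1 ?X' (Sg d (fst q') (snd q')) - Hc c0 c1 ?X (Sg d (fst q) (snd q)))
          \<le> Lc * \<bar>?X' - ?X\<bar> + K * \<bar>Sg d (fst q') (snd q') - Sg d (fst q) (snd q)\<bar>"
      proof (rule Hc_diff)
        show "norm (c0 ?X' - c0 ?X) \<le> Lc * \<bar>?X' - ?X\<bar>"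
          using L0(2) xq unfolding Lc_def by (meson max.cobounded1 mult_right_mono abs_ge_zero order_trans)
        show "norm (c1 ?X' - c1 ?X) \<le> Lc * \<bar>?X' - ?X\<bar>"
          using L1(2) xq unfolding Lc_def by (meson max.cobounded2 mult_right_mono abs_ge_zero order_trans)
        show "norm (c0 ?X - c1 ?X) \<le> K"
          using B0(2) B1(2) xq norm_triangle_ineq4[of "c0 ?X" "c1 ?X"] unfolding K_def by fastforce
        show "0 \<le> Sg d (fst q') (snd q')" "Sg d (fst q') (snd q') \<le> 1" unfolding Sg_def using Sl_range by auto
      qed
      also have "\<dots> \<le> Lc * (11 * dist q' q + 10 * d * dist q' q) + K * ((16/d) * dist q' q + 5 * dist q' q)"
      proof (intro add_mono mult_left_mono)
        have "\<bar>?X' - ?X\<bar> \<le> 11 * \<bar>fst q' - fst q\<bar> + 10 * d * \<bar>snd q' - snd q\<bar>" by (rule Xg_lip[OF d0])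
        also have "\<dots> \<le> 11 * dist q' q + 10 * d * dist q' q"
          using dist_fst_le[of q' q] dist_snd_le[of q' q] d0
          by (intro add_mono mult_left_mono) (auto simp: dist_real_def)
        finally show "\<bar>?X' - ?X\<bar> \<le> 11 * dist q' q + 10 * d * dist q' q" .
        have "\<bar>Sg d (fst q') (snd q') - Sg d (fst q) (snd q)\<bar> \<le> (16/d) * \<bar>fst q' - fst q\<bar> + 5 * \<bar>snd q' - snd q\<bar>"
          unfolding Sg_def by (rule Sg_lip[OF d0])
        also have "\<dots> \<le> (16/d) * dist q' q + 5 * dist q' q"
          using dist_fst_le[of q' q] dist_snd_le[of q' q] d0
          by (intro add_mono mult_left_mono) (auto simp: dist_real_def)
        finally show "\<bar>Sg d (fst q') (snd q') - Sg d (fst q) (snd q)\<bar> \<le> (16/d) * dist q' q + 5 * dist q' q" .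
      qed (use Lc in auto)
      also have "\<dots> = LL * dist q' q" unfolding LL_def by (simp add: algebra_simps)
      finally have "norm (Cm c0 c1 d (fst q') (snd q') - Cm c0 c1 d (fst q) (snd q)) \<le> LL * dist q' q"
        unfolding Cm_def .
      then show "dist ((\<lambda>(\<theta>, v). Cm c0 c1 d \<theta> v) q) ((\<lambda>(\<theta>, v). Cm c0 c1 d \<theta> v) q') \<le> LL * dist q q'"
        by (simp add: case_prod_beta dist_norm norm_minus_commute dist_commute)
    qed
    then show "\<exists>e>0. \<exists>L. L-lipschitz_on (cball p e \<inter> UNIV \<times> {0<..<1}) (\<lambda>(\<theta>, v). Cm c0 c1 d \<theta> v)"
      by (intro exI[of _ 1] exI[of _ LL]) auto
  qed
  have b0: "Cm c0 c1 d \<theta> 0 = c0 \<theta>" for \<theta>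
    using at_0[of 0 "Ug d \<theta>"] unfolding Cm_def Xg_def Sg_def Hc_def by simp
  have b1: "Cm c0 c1 d \<theta> 1 = c1 \<theta>" for \<theta>
    using at_1[of 1 "Ug d \<theta>"] unfolding Cm_def Xg_def Sg_def Hc_def by simp
  show ?thesis unfolding homotopy_class_def using per cont loc b0 b1 by auto
qed

theorem mainTheorem14:
  fixes c0 c1 :: "real \<Rightarrow> real ^ 'n"
  assumes "CARD('n) \<ge> 2"
    and "smooth_regular_closed_curve c0"
    and "smooth_regular_closed_curve c1"
    and "(\<epsilon>::real) > 0"
  shows "\<exists>C \<in> homotopy_class c0 c1. energy_density C \<in> borel_measurable lborel \<and> energy C < ennreal \<epsilon>"
proof -
  have sm0: "smooth_regular_closed_curve c0" and sm1: "smooth_regular_closed_curve c1" and eps: "\<epsilon> > 0"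
    using assms by auto
  have s0: "smooth_curve c0" and s1: "smooth_curve c1"
    using sm0 sm1 unfolding smooth_regular_closed_curve_def by auto
  have cc0: "continuous_on UNIV c0" and cc1: "continuous_on UNIV c1"
    using smooth_props(1) s0 s1 by auto
  obtain L0 where L0: "L0 \<ge> 0" "\<forall>x\<in>{-10..10}. \<forall>y\<in>{-10..10}. norm (c0 x - c0 y) \<le> L0 * \<bar>x - y\<bar>"
    using smooth_props(2)[OF s0, where R=10] by auto
  obtain L1 where L1: "L1 \<ge> 0" "\<forall>x\<in>{-10..10}. \<forall>y\<in>{-10..10}. norm (c1 x - c1 y) \<le> L1 * \<bar>x - y\<bar>"
    using smooth_props(2)[OF s1, where R=10] by auto
  obtain B0 where B0: "B0 \<ge> 0" "\<forall>x\<in>{-10..10}. norm (c0 x) \<le> B0"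
    using smooth_props(3)[OF s0, where R=10] by auto
  obtain B1 where B1: "B1 \<ge> 0" "\<forall>x\<in>{-10..10}. norm (c1 x) \<le> B1"
    using smooth_props(3)[OF s1, where R=10] by auto
  define L where "L = max L0 L1"
  define K where "K = B0 + B1"
  have LK: "0 \<le> L" "0 \<le> K" using L0 B0 B1 unfolding L_def K_def by auto
  have Lc0: "norm (c0 x - c0 y) \<le> L * \<bar>x - y\<bar>" if "x \<in> {-10..10}" "y \<in> {-10..10}" for x y
    using L0(2) that unfolding L_def by (meson max.cobounded1 mult_right_mono abs_ge_zero order_trans)
  have Lc1: "norm (c1 x - c1 y) \<le> L * \<bar>x - y\<bar>" if "x \<in> {-10..10}" "y \<in> {-10..10}" for x y
    using L1(2) that unfolding L_def by (meson max.cobounded2 mult_right_mono abs_ge_zero order_trans)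
  have Kb: "norm (c0 x - c1 x) \<le> K" if "x \<in> {-10..10}" for x
    using B0(2) B1(2) that norm_triangle_ineq4[of "c0 x" "c1 x"] unfolding K_def by fastforce
  define Q where "Q = 600 * L^3 + 800 * K * L^2 + 1"
  have Q: "Q > 0" unfolding Q_def using LK by (simp add: add_nonneg_pos)
  define M where "M = nat \<lceil>4 * pi^2 * Q / \<epsilon>\<rceil> + 8"
  have Mge: "real M \<ge> 4 * pi^2 * Q / \<epsilon> + 8"
    unfolding M_def using real_nat_ceiling_ge[of "4 * pi^2 * Q / \<epsilon>"] by simp
  have M0: "M > 0" unfolding M_def by simp
  define d where "d = 2 * pi / real M"
  have d0: "d > 0" unfolding d_def using M0 by simp
  have d1: "d \<le> 1"
  proof -
    have "2 * pi \<le> real M" using Mge pi_less_4 eps Q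
      by (smt (verit, best) divide_nonneg_pos mult_nonneg_nonneg pi_ge_zero zero_le_power2)
    then show ?thesis unfolding d_def using M0 by simp
  qed
  define \<kappa> where "\<kappa> = (6*L + 8*K/d) * (10*d*L)^2"
  have keq: "\<kappa> = 600 * L^3 * d^2 + 800 * K * L^2 * d"
    unfolding \<kappa>_def using d0 by (simp add: power2_eq_square power3_eq_cube field_simps)
  have "\<kappa> \<le> 600 * L^3 * d + 800 * K * L^2 * d"
  proof -
    have "d^2 \<le> d" using d0 d1 by (simp add: power2_eq_square mult_left_le)
    then have "600 * L^3 * d^2 \<le> 600 * L^3 * d" using LK by (intro mult_left_mono) auto
    then show ?thesis unfolding keq by simp
  qed
  also have "\<dots> < d * Q" unfolding Q_def using d0 by (simp add: algebra_simps)
  finally have kQ: "\<kappa> < d * Q" .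
  have "\<kappa> * (2*pi) < d * Q * (2*pi)" using kQ by (simp add: pi_gt_zero)
  also have "d * Q * (2*pi) = 4 * pi^2 * Q / real M" unfolding d_def by (simp add: power2_eq_square)
  also have "\<dots> < \<epsilon>"
  proof -
    have "4 * pi^2 * Q / \<epsilon> < real M" using Mge by simp
    then have "4 * pi^2 * Q < \<epsilon> * real M" using eps by (simp add: divide_less_eq mult.commute)
    then show ?thesis using M0 by (simp add: divide_less_eq mult.commute)
  qed
  finally have kl: "\<kappa> * (2*pi) < \<epsilon>" .
  have "energy (Cm c0 c1 d) \<le> ennreal (\<kappa> * (2*pi))"
    unfolding \<kappa>_def by (rule energy_bound[OF d0 d1 LK Lc0 Lc1 Kb])
  also have "\<dots> < ennreal \<epsilon>" using kl eps by (intro ennreal_lessI) auto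
  finally have en: "energy (Cm c0 c1 d) < ennreal \<epsilon>" .
  have cl: "Cm c0 c1 d \<in> homotopy_class c0 c1"
    by (rule Cm_in_class[OF sm0 sm1 M0 d_def d1])
  have ms: "energy_density (Cm c0 c1 d) \<in> borel_measurable lborel"
    by (rule energy_density_measurable[OF Cm_cont[OF d0 cc0 cc1]])
  show ?thesis using cl ms en by blast
qed

end
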